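(* For all integers $1\le q\le k$, $g(k,q)\le u(k,q)$, where $g(k,q)$ is the smallest cardinality of a subset of $\{-1,+1\}^k$ intersecting every $(k-q)$-subcube, and $u(k,q)$ is the smallest cardinality of a set of uniqueness for $(\mathcal{B}^k_q)_+$.
   Context: Let $\mathcal{X}=\{-1,+1\}^k$. A $(k-q)$-subcube of $\mathcal{X}$ is a set obtained by fixing the values of exactly $q$ coordinates and letting the other $k-q$ coordinates range freely. For $L\subseteq\{1,\ldots,k\}$ let $w_L(x)=\prod_{j\in L}x_j$ (with $w_\emptyset\equiv 1$); $\mathcal{B}^k_q$ is the linear span of $\{w_L:|L|\le q\}$ and $(\mathcal{B}^k_q)_+=\{\varphi\in\mathcal{B}^k_q:\varphi\ge 0\}$. A set $U\subseteq\mathcal{X}$ is a set of uniqueness for $(\mathcal{B}^k_q)_+$ if the only $\varphi\in(\mathcal{B}^k_q)_+$ vanishing on $U$ is $\varphi\equiv 0$. *)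

theory Defs
  imports Complex_Main
begin

definition cube :: "nat \<Rightarrow> (nat \<Rightarrow> real) set" where
  "cube k = {x. (\<forall>j<k. x j = 1 \<or> x j = -1) \<and> (\<forall>j. k \<le> j \<longrightarrow> x j = 0)}"

text \<open>A (k-q)-subcube: fix exactly q coordinates Q to values a.\<close>
definition subcube :: "nat \<Rightarrow> nat set \<Rightarrow> (nat \<Rightarrow> real) \<Rightarrow> (nat \<Rightarrow> real) set" where
  "subcube k Q a = {x \<in> cube k. \<forall>j\<in>Q. x j = a j}"

definition is_subcube :: "nat \<Rightarrow> nat \<Rightarrow> (nat \<Rightarrow> real) set \<Rightarrow> bool" where
  "is_subcube k q S \<longleftrightarrow> (\<exists>Q a. Q \<subseteq> {..<k} \<and> card Q = q \<and>
      (\<forall>j\<in>Q. a j = 1 \<or> a j = -1) \<and> S = subcube k Q a)"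

definition walsh :: "nat set \<Rightarrow> (nat \<Rightarrow> real) \<Rightarrow> real" where
  "walsh L x = (\<Prod>j\<in>L. x j)"

definition Bkq :: "nat \<Rightarrow> nat \<Rightarrow> ((nat \<Rightarrow> real) \<Rightarrow> real) set" where
  "Bkq k q = {\<phi>. \<exists>c :: nat set \<Rightarrow> real. \<forall>x\<in>cube k.
      \<phi> x = (\<Sum>L\<in>{L. L \<subseteq> {..<k} \<and> card L \<le> q}. c L * walsh L x)}"

definition Bkq_plus :: "nat \<Rightarrow> nat \<Rightarrow> ((nat \<Rightarrow> real) \<Rightarrow> real) set" where
  "Bkq_plus k q = {\<phi> \<in> Bkq k q. \<forall>x\<in>cube k. \<phi> x \<ge> 0}"

definition uniqueness_set :: "nat \<Rightarrow> nat \<Rightarrow> (nat \<Rightarrow> real) set \<Rightarrow> bool" where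
  "uniqueness_set k q U \<longleftrightarrow> U \<subseteq> cube k \<and>
     (\<forall>\<phi>\<in>Bkq_plus k q. (\<forall>x\<in>U. \<phi> x = 0) \<longrightarrow> (\<forall>x\<in>cube k. \<phi> x = 0))"

definition hitting_set :: "nat \<Rightarrow> nat \<Rightarrow> (nat \<Rightarrow> real) set \<Rightarrow> bool" where
  "hitting_set k q H \<longleftrightarrow> H \<subseteq> cube k \<and>
     (\<forall>S. is_subcube k q S \<longrightarrow> H \<inter> S \<noteq> {})"

definition g :: "nat \<Rightarrow> nat \<Rightarrow> nat" where
  "g k q = (LEAST n. \<exists>H. hitting_set k q H \<and> card H = n)"

definition u :: "nat \<Rightarrow> nat \<Rightarrow> nat" where
  "u k q = (LEAST n. \<exists>U. uniqueness_set k q U \<and> card U = n)"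

end

theory Submission
  imports Defs
begin

lemma ind_in_Bkq:
  assumes Q: "Q \<subseteq> {..<k}" "card Q = q"
  shows "(\<lambda>x. \<Prod>j\<in>Q. a j * x j / 2 + 1/2) \<in> Bkq k q"
proof -
  have fQ: "finite Q" using Q finite_subset by blast
  define c where "c L = (if L \<subseteq> Q then (\<Prod>j\<in>L. a j / 2) * (\<Prod>j\<in>Q - L. (1/2::real)) else 0)" for L
  have "(\<Prod>j\<in>Q. a j * x j / 2 + 1/2) = (\<Sum>L\<in>{L. L \<subseteq> {..<k} \<and> card L \<le> q}. c L * walsh L x)" for x
  proof -
    have "(\<Prod>j\<in>Q. a j * x j / 2 + 1/2) = (\<Sum>X\<in>Pow Q. (\<Prod>j\<in>X. a j * x j / 2) * (\<Prod>j\<in>Q-X. (1/2::real)))"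
      by (rule prod_add[OF fQ])
    also have "\<dots> = (\<Sum>X\<in>Pow Q. c X * walsh X x)"
      by (rule sum.cong) (auto simp: c_def walsh_def simp flip: prod.distrib intro!: prod.cong)
    also have "\<dots> = (\<Sum>L\<in>{L. L \<subseteq> {..<k} \<and> card L \<le> q}. c L * walsh L x)"
    proof (rule sum.mono_neutral_left)
      show "finite {L. L \<subseteq> {..<k} \<and> card L \<le> q}" by simp
      show "Pow Q \<subseteq> {L. L \<subseteq> {..<k} \<and> card L \<le> q}"
        using Q fQ by (auto intro: card_mono)
      show "\<forall>i\<in>{L. L \<subseteq> {..<k} \<and> card L \<le> q} - Pow Q. c i * walsh i x = 0"
        by (auto simp: c_def)
    qed
    finally show ?thesis .
  qed
  then show ?thesis unfolding Bkq_def by blast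
qed

lemma uniq_hit:
  assumes U: "uniqueness_set k q U"
  shows "hitting_set k q U"
  unfolding hitting_set_def
proof (intro conjI allI impI)
  show "U \<subseteq> cube k" using U uniqueness_set_def by blast
  fix S assume "is_subcube k q S"
  then obtain Q a where Q: "Q \<subseteq> {..<k}" "card Q = q" and a: "\<forall>j\<in>Q. a j = 1 \<or> a j = -1"
    and S: "S = subcube k Q a" unfolding is_subcube_def by blast
  define \<phi> where "\<phi> = (\<lambda>x. \<Prod>j\<in>Q. a j * x j / 2 + (1/2::real))"
  have B: "\<phi> \<in> Bkq k q" unfolding \<phi>_def by (rule ind_in_Bkq[OF Q])
  have fac: "a j * x j / 2 + 1/2 = (if x j = a j then 1 else (0::real))"
    if "x \<in> cube k" "j \<in> Q" for x j
  proof -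
    have "x j = 1 \<or> x j = -1" using that Q unfolding cube_def by auto
    then show ?thesis using a that by auto
  qed
  have nn: "\<phi> x \<ge> 0" if "x \<in> cube k" for x
    unfolding \<phi>_def using fac[OF that] by (auto intro: prod_nonneg)
  have zero: "\<phi> x = 0" if xc: "x \<in> cube k" "x \<notin> S" for x
  proof -
    obtain j where "j \<in> Q" "x j \<noteq> a j" using xc unfolding S subcube_def by blast
    moreover have "finite Q" using Q finite_subset by blast
    ultimately show ?thesis unfolding \<phi>_def using fac[OF xc(1)]
      by (intro prod_zero) auto
  qed
  have one: "\<phi> x = 1" if "x \<in> S" for x
  proof -
    have "x \<in> cube k" "\<forall>j\<in>Q. x j = a j" using that S unfolding subcube_def by auto
    then have "\<forall>j\<in>Q. a j * x j / 2 + 1/2 = (1::real)" using a by auto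
    then show ?thesis unfolding \<phi>_def by simp
  qed
  define y where "y j = (if j < k then (if j \<in> Q then a j else 1) else (0::real))" for j
  have yS: "y \<in> S" using a Q S unfolding y_def subcube_def cube_def by auto
  show "U \<inter> S \<noteq> {}"
  proof
    assume "U \<inter> S = {}"
    then have "\<forall>x\<in>U. \<phi> x = 0" using zero U unfolding uniqueness_set_def by blast
    moreover have "\<phi> \<in> Bkq_plus k q" using B nn unfolding Bkq_plus_def by blast
    ultimately have "\<forall>x\<in>cube k. \<phi> x = 0" using U unfolding uniqueness_set_def by blast
    moreover have "y \<in> cube k" using yS S subcube_def by blast
    ultimately show False using one[OF yS] by simp
  qed
qed

theorem corollary2:
  fixes k q :: nat
  assumes "1 \<le> q" and "q \<le> k"
  shows "g k q \<le> u k q"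
proof -
  have ex: "\<exists>n U. uniqueness_set k q U \<and> card U = n"
    by (rule exI[of _ "card (cube k)"], rule exI[of _ "cube k"]) (simp add: uniqueness_set_def)
  have "\<exists>U. uniqueness_set k q U \<and> card U = u k q"
    unfolding u_def using ex by (rule LeastI_ex)
  then obtain U where "uniqueness_set k q U" "card U = u k q" by blast
  then have "hitting_set k q U" "card U = u k q" using uniq_hit by auto
  then show ?thesis unfolding g_def by (auto intro: Least_le)
qed

end
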